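(* The axiom system $\mathbf{AX}^{f}=\{\mathrm{Taut},\mathrm{MP},F1,F2,F3,F4,F5,F6\}$ is sound and complete for formulas about linear inequalities over real-valued functions with nonempty domain: such a formula is provable in $\mathbf{AX}^f$ iff it is valid.
   Context: Formulas about linear inequalities over real-valued functions are Boolean combinations of inequalities $a_1v_1+\cdots+a_kv_k\ge\tilde c$, where $v_1,v_2,\ldots$ are variables and $a_i,c$ are real numbers. Such a formula is satisfied by an assignment of functions $D\to\mathbb R$ (for a nonempty set $D$) to the variables if it holds when $\tilde c$ is read as the constant function $c$ on $D$, sums and scalar multiples pointwise, and $\ge$ as the pointwise order; Boolean connectives classical. It is valid if satisfied by every such assignment for every nonempty $D$. Abbreviations: $t\le\tilde d$ is $-t\ge\widetilde{-d}$; $t>\tilde d$ is $t\ge\tilde d\wedge\neg(t\le\tilde d)$. Axioms: Taut: all instances of propositional tautologies. MP: from $f$ and $f\Rightarrow g$ infer $g$. F1: $v-v\ge\tilde0$. F2: $(a_1v_1+\cdots+a_kv_k\ge\tilde c)\Leftrightarrow(a_1v_1+\cdots+a_kv_k+0v_{k+1}\ge\tilde c)$. F3: $(a_1v_1+\cdots+a_kv_k\ge\tilde c)\Leftrightarrow(a_{j_1}v_{j_1}+\cdots+a_{j_k}v_{j_k}\ge\tilde c)$ for any permutation $j_1,\ldots,j_k$ of $1,\ldots,k$. F4: $(a_1v_1+\cdots+a_kv_k\ge\tilde c)\wedge(a'_1v_1+\cdots+a'_kv_k\ge\tilde c')\Rightarrow((a_1+a'_1)v_1+\cdots+(a_k+a'_k)v_k\ge\widetilde{c+c'})$.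 F5: $(a_1v_1+\cdots+a_kv_k\ge\tilde c)\Leftrightarrow(da_1v_1+\cdots+da_kv_k\ge\widetilde{dc})$ for $d>0$. F6: $(a_1v_1+\cdots+a_kv_k\ge\tilde c)\Rightarrow(a_1v_1+\cdots+a_kv_k>\tilde d)$ if $c>d$. *)

theory Defs
  imports Complex_Main "HOL-Library.Multiset"
begin

text \<open>A term a1 v1 + ... + ak vk is a list of (coefficient, variable index) pairs;
  repetitions of variables are allowed (cf. axiom F1). Well-formed terms are nonempty (k >= 1).\<close>

type_synonym lterm = "(real \<times> nat) list"

datatype fm = Ge lterm real | Neg fm | Conj fm fm

definition Imp :: "fm \<Rightarrow> fm \<Rightarrow> fm" where
  "Imp f g = Neg (Conj f (Neg g))"

definition Iff :: "fm \<Rightarrow> fm \<Rightarrow> fm" where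
  "Iff f g = Conj (Imp f g) (Imp g f)"

definition Le :: "lterm \<Rightarrow> real \<Rightarrow> fm" where
  "Le t d = Ge (map (\<lambda>(a, v). (- a, v)) t) (- d)"

definition Gt :: "lterm \<Rightarrow> real \<Rightarrow> fm" where
  "Gt t d = Conj (Ge t d) (Neg (Le t d))"

fun wff :: "fm \<Rightarrow> bool" where
  "wff (Ge t c) = (t \<noteq> [])"
| "wff (Neg f) = wff f"
| "wff (Conj f g) = (wff f \<and> wff g)"

text \<open>An assignment gives each variable a function; only its values on D matter.\<close>
definition tval :: "lterm \<Rightarrow> (nat \<Rightarrow> 'd \<Rightarrow> real) \<Rightarrow> 'd \<Rightarrow> real" where
  "tval t \<sigma> x = (\<Sum>(a, v)\<leftarrow>t. a * \<sigma> v x)"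

fun sat :: "'d set \<Rightarrow> (nat \<Rightarrow> 'd \<Rightarrow> real) \<Rightarrow> fm \<Rightarrow> bool" where
  "sat D \<sigma> (Ge t c) = (\<forall>x\<in>D. tval t \<sigma> x \<ge> c)"
| "sat D \<sigma> (Neg f) = (\<not> sat D \<sigma> f)"
| "sat D \<sigma> (Conj f g) = (sat D \<sigma> f \<and> sat D \<sigma> g)"

definition valid :: "'d itself \<Rightarrow> fm \<Rightarrow> bool" where
  "valid _ f \<longleftrightarrow> (\<forall>(D :: 'd set) (\<sigma> :: nat \<Rightarrow> 'd \<Rightarrow> real). D \<noteq> {} \<longrightarrow> sat D \<sigma> f)"

datatype pf = PVar nat | PNot pf | PAnd pf pf

fun peval :: "(nat \<Rightarrow> bool) \<Rightarrow> pf \<Rightarrow> bool" where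
  "peval \<beta> (PVar n) = \<beta> n"
| "peval \<beta> (PNot p) = (\<not> peval \<beta> p)"
| "peval \<beta> (PAnd p q) = (peval \<beta> p \<and> peval \<beta> q)"

definition tautology :: "pf \<Rightarrow> bool" where
  "tautology p \<longleftrightarrow> (\<forall>\<beta>. peval \<beta> p)"

fun psubst :: "(nat \<Rightarrow> fm) \<Rightarrow> pf \<Rightarrow> fm" where
  "psubst s (PVar n) = s n"
| "psubst s (PNot p) = Neg (psubst s p)"
| "psubst s (PAnd p q) = Conj (psubst s p) (psubst s q)"

inductive axiom :: "fm \<Rightarrow> bool" where
  Taut: "tautology p \<Longrightarrow> wff (psubst s p) \<Longrightarrow> axiom (psubst s p)"
| F1: "axiom (Ge [(1, v), (-1, v)] 0)"
| F2: "t \<noteq> [] \<Longrightarrow> axiom (Iff (Ge t c) (Ge (t @ [(0, w)]) c))"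
| F3: "t \<noteq> [] \<Longrightarrow> mset t' = mset t \<Longrightarrow> axiom (Iff (Ge t c) (Ge t' c))"
| F4: "vs \<noteq> [] \<Longrightarrow> length as = length vs \<Longrightarrow> length as' = length vs \<Longrightarrow>
       axiom (Imp (Conj (Ge (zip as vs) c) (Ge (zip as' vs) c'))
                  (Ge (zip (map2 (+) as as') vs) (c + c')))"
| F5: "vs \<noteq> [] \<Longrightarrow> length as = length vs \<Longrightarrow> d > 0 \<Longrightarrow>
       axiom (Iff (Ge (zip as vs) c) (Ge (zip (map (\<lambda>a. d * a) as) vs) (d * c)))"
| F6: "t \<noteq> [] \<Longrightarrow> c > d \<Longrightarrow> axiom (Imp (Ge t c) (Gt t d))"

inductive provable :: "fm \<Rightarrow> bool" where
  Ax: "axiom f \<Longrightarrow> provable f"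
| MP: "provable f \<Longrightarrow> provable (Imp f g) \<Longrightarrow> provable g"

end

theory Submission
  imports Defs
begin

definition lf :: "lterm \<Rightarrow> nat \<Rightarrow> real" where
  "lf t v = (\<Sum>(a, w)\<leftarrow>t. if w = v then a else 0)"

definition ev :: "lterm \<Rightarrow> (nat \<Rightarrow> real) \<Rightarrow> real" where
  "ev t x = (\<Sum>(a, w)\<leftarrow>t. a * x w)"

definition scale :: "real \<Rightarrow> lterm \<Rightarrow> lterm" where
  "scale k t = map (\<lambda>(a, w). (k * a, w)) t"

lemma lf_Nil[simp]: "lf [] v = 0" by (simp add: lf_def)
lemma lf_Cons[simp]: "lf ((a, w) # t) v = (if w = v then a else 0) + lf t v"
  by (simp add: lf_def)
lemma lf_append[simp]: "lf (t @ u) v = lf t v + lf u v"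
  by (simp add: lf_def)
lemma lf_scale[simp]: "lf (scale k t) v = k * lf t v"
  by (induction t) (auto simp: scale_def lf_def algebra_simps)
lemma ev_Nil[simp]: "ev [] x = 0" by (simp add: ev_def)
lemma ev_Cons[simp]: "ev ((a, w) # t) x = a * x w + ev t x"
  by (simp add: ev_def)
lemma ev_append[simp]: "ev (t @ u) x = ev t x + ev u x"
  by (simp add: ev_def)
lemma ev_scale[simp]: "ev (scale k t) x = k * ev t x"
  by (induction t) (auto simp: scale_def ev_def algebra_simps)
lemma scale_Nil[simp]: "scale k [] = []" by (simp add: scale_def)
lemma scale_eq_Nil[simp]: "scale k t = [] \<longleftrightarrow> t = []" by (simp add: scale_def)
lemma ev_upd: "ev t (x(v := y)) = ev t x + lf t v * (y - x v)"
proof (induction t)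
  case (Cons p t)
  then show ?case by (cases p) (simp add: algebra_simps)
qed simp
lemma tval_ev: "tval t \<sigma> x = ev t (\<lambda>v. \<sigma> v x)"
  by (simp add: tval_def ev_def)
lemma sum_list_mset: "mset xs = mset ys \<Longrightarrow> sum_list (map (g :: _ \<Rightarrow> real) xs) = sum_list (map g ys)"
proof -
  assume "mset xs = mset ys"
  then have "mset (map g xs) = mset (map g ys)" by simp
  then show ?thesis using sum_mset_sum_list[of "map g xs"] sum_mset_sum_list[of "map g ys"] by simp
qed
lemma lf_mset: "mset t = mset t' \<Longrightarrow> lf t v = lf t' v"
  unfolding lf_def by (rule sum_list_mset)
lemma ev_mset: "mset t = mset t' \<Longrightarrow> ev t x = ev t' x"
  unfolding ev_def by (rule sum_list_mset)
lemma lf_nz: "lf t v \<noteq> 0 \<Longrightarrow> v \<in> snd ` set t"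
  by (induction t) (auto split: if_splits)

section \<open>Propositional reasoning\<close>

fun feval :: "(lterm \<Rightarrow> real \<Rightarrow> bool) \<Rightarrow> fm \<Rightarrow> bool" where
  "feval \<beta> (Ge t c) = \<beta> t c"
| "feval \<beta> (Neg f) = (\<not> feval \<beta> f)"
| "feval \<beta> (Conj f g) = (feval \<beta> f \<and> feval \<beta> g)"

fun atoms :: "fm \<Rightarrow> (lterm \<times> real) list" where
  "atoms (Ge t c) = [(t, c)]"
| "atoms (Neg f) = atoms f"
| "atoms (Conj f g) = atoms f @ atoms g"

lemma feval_Imp[simp]: "feval \<beta> (Imp f g) = (feval \<beta> f \<longrightarrow> feval \<beta> g)"
  by (simp add: Imp_def)
lemma feval_Iff[simp]: "feval \<beta> (Iff f g) = (feval \<beta> f \<longleftrightarrow> feval \<beta> g)"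
  by (auto simp add: Iff_def)
lemma wff_Imp[simp]: "wff (Imp f g) = (wff f \<and> wff g)"
  by (simp add: Imp_def)
lemma wff_Iff[simp]: "wff (Iff f g) = (wff f \<and> wff g)"
  by (auto simp add: Iff_def)
lemma feval_foldr[simp]: "feval \<beta> (foldr Imp H g) = ((\<forall>h\<in>set H. feval \<beta> h) \<longrightarrow> feval \<beta> g)"
  by (induction H) auto
lemma wff_foldr[simp]: "wff (foldr Imp H g) = ((\<forall>h\<in>set H. wff h) \<and> wff g)"
  by (induction H) auto

lemma sat_feval: "sat D \<sigma> f = feval (\<lambda>t c. sat D \<sigma> (Ge t c)) f"
  by (induction f) auto

lemma feval_cong: "(\<forall>(t, c)\<in>set (atoms f). \<beta> t c = \<gamma> t c) \<Longrightarrow> feval \<beta> f = feval \<gamma> f"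
  by (induction f) auto

fun idx :: "'a list \<Rightarrow> 'a \<Rightarrow> nat" where
  "idx [] x = 0"
| "idx (y # ys) x = (if y = x then 0 else Suc (idx ys x))"

lemma idx_nth: "x \<in> set as \<Longrightarrow> as ! idx as x = x"
  by (induction as) auto

fun toP :: "(lterm \<times> real) list \<Rightarrow> fm \<Rightarrow> pf" where
  "toP as (Ge t c) = PVar (idx as (t, c))"
| "toP as (Neg f) = PNot (toP as f)"
| "toP as (Conj f g) = PAnd (toP as f) (toP as g)"

lemma psubst_toP: "set (atoms f) \<subseteq> set as \<Longrightarrow>
  psubst (\<lambda>i. Ge (fst (as ! i)) (snd (as ! i))) (toP as f) = f"
  by (induction f) (auto simp: idx_nth)

lemma peval_toP: "peval \<beta> (toP as f) = feval (\<lambda>t c. \<beta> (idx as (t, c))) f"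
  by (induction f) auto

lemma taut_provable:
  assumes "wff f" "\<And>\<beta>. feval \<beta> f"
  shows "provable f"
proof -
  let ?as = "atoms f"
  have "tautology (toP ?as f)" unfolding tautology_def using assms(2) by (simp add: peval_toP)
  moreover have "wff (psubst (\<lambda>i. Ge (fst (?as ! i)) (snd (?as ! i))) (toP ?as f))"
    using psubst_toP[of f ?as] assms(1) by simp
  ultimately have "axiom (psubst (\<lambda>i. Ge (fst (?as ! i)) (snd (?as ! i))) (toP ?as f))"
    by (rule axiom.Taut)
  then show ?thesis using psubst_toP[of f ?as] by (simp add: provable.Ax)
qed

lemma prop_closure:
  assumes "wff h" "\<forall>g\<in>set gs. provable g"
    "\<And>\<beta>. (\<forall>g\<in>set gs. feval \<beta> g) \<Longrightarrow> feval \<beta> h"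
    "\<forall>g\<in>set gs. wff g"
  shows "provable h"
  using assms
proof (induction gs arbitrary: h)
  case Nil
  then show ?case using taut_provable by auto
next
  case (Cons g gs)
  have "provable (Imp g h)"
  proof (rule Cons.IH)
    show "wff (Imp g h)" using Cons.prems(1,4) by simp
    show "\<forall>g\<in>set gs. provable g" using Cons.prems(2) by simp
    show "\<And>\<beta>. (\<forall>g\<in>set gs. feval \<beta> g) \<Longrightarrow> feval \<beta> (Imp g h)" using Cons.prems(3) by simp
    show "\<forall>g\<in>set gs. wff g" using Cons.prems(4) by simp
  qed
  moreover have "provable g" using Cons.prems(2) by simp
  ultimately show ?case using provable.MP by blast
qed

lemma axiom_wff: "axiom f \<Longrightarrow> wff f"
proof (induction rule: axiom.induct)
  case (F3 t t' c)
  then show ?case by (auto simp: Iff_def)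
next
  case (F4 vs as as' c c')
  then show ?case by (auto simp: zip_eq_Nil_iff)
next
  case (F5 vs as d c)
  then show ?case by (auto simp: zip_eq_Nil_iff)
qed (simp_all add: Gt_def Le_def)

lemma provable_wff: "provable f \<Longrightarrow> wff f"
proof (induction rule: provable.induct)
  case (Ax f)
  then show ?case by (rule axiom_wff)
next
  case (MP f g)
  then show ?case by simp
qed

lemma pc:
  assumes "wff h" "\<forall>g\<in>set gs. provable g"
    "\<And>\<beta>. (\<forall>g\<in>set gs. feval \<beta> g) \<Longrightarrow> feval \<beta> h"
  shows "provable h"
  using prop_closure[OF assms] provable_wff assms(2) by blast


lemma imp_trans: "provable (Imp A B) \<Longrightarrow> provable (Imp B C) \<Longrightarrow> provable (Imp A C)"
proof -
  assume a: "provable (Imp A B)" and b: "provable (Imp B C)"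
  have "wff (Imp A C)" using provable_wff[OF a] provable_wff[OF b] by simp
  then show ?thesis by (rule pc[where gs="[Imp A B, Imp B C]"]) (use a b in auto)
qed

lemma iff_imp1: "provable (Iff A B) \<Longrightarrow> provable (Imp A B)"
proof -
  assume a: "provable (Iff A B)"
  have "wff (Imp A B)" using provable_wff[OF a] by simp
  then show ?thesis by (rule pc[where gs="[Iff A B]"]) (use a in auto)
qed

lemma iff_imp2: "provable (Iff A B) \<Longrightarrow> provable (Imp B A)"
proof -
  assume a: "provable (Iff A B)"
  have "wff (Imp B A)" using provable_wff[OF a] by simp
  then show ?thesis by (rule pc[where gs="[Iff A B]"]) (use a in auto)
qed

lemma refl_imp: "wff A \<Longrightarrow> provable (Imp A A)"
  by (rule taut_provable) auto

lemma mp2: "provable A \<Longrightarrow> provable B \<Longrightarrow> provable (Imp (Conj A B) C) \<Longrightarrow> provable C"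
proof -
  assume a: "provable A" and b: "provable B" and c: "provable (Imp (Conj A B) C)"
  have "wff C" using provable_wff[OF c] by simp
  then show ?thesis by (rule pc[where gs="[A, B, Imp (Conj A B) C]"]) (use a b c in auto)
qed

definition zs :: "nat list \<Rightarrow> lterm" where
  "zs ws = map (\<lambda>w. (0, w)) ws"

definition neg :: "lterm \<Rightarrow> lterm" where
  "neg t = map (\<lambda>(a, w). (- a, w)) t"

definition addt :: "lterm \<Rightarrow> lterm \<Rightarrow> lterm" where
  "addt t u = map (\<lambda>((a, w), (b, w')). (a + b, w)) (zip t u)"

lemma zs_simps[simp]: "zs [] = []" "zs (w # ws) = (0, w) # zs ws" "zs (ws @ vs) = zs ws @ zs vs"
  "length (zs ws) = length ws" "map snd (zs ws) = ws" "zs ws = [] \<longleftrightarrow> ws = []"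
  by (auto simp: zs_def comp_def)
lemma lf_zs[simp]: "lf (zs ws) v = 0"
  by (induction ws) auto
lemma neg_simps[simp]: "neg [] = []" "neg ((a, w) # t) = (- a, w) # neg t" "neg (t @ u) = neg t @ neg u"
  "length (neg t) = length t" "map snd (neg t) = map snd t" "neg t = [] \<longleftrightarrow> t = []"
  by (auto simp: neg_def)
lemma lf_neg[simp]: "lf (neg t) v = - lf t v"
  by (induction t) auto
lemma ev_neg[simp]: "ev (neg t) x = - ev t x"
  by (induction t) auto
lemma addt_Cons[simp]: "addt ((a, w) # t) ((b, w') # u) = (a + b, w) # addt t u"
  by (simp add: addt_def)
lemma addt_Nil[simp]: "addt [] u = []" by (simp add: addt_def)
lemma addt_append: "length t = length t' \<Longrightarrow> addt (t @ u) (t' @ u') = addt t t' @ addt u u'"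
  by (simp add: addt_def)
lemma addt_zs_right[simp]: "addt t (zs (map snd t)) = t"
  by (induction t) auto
lemma addt_zs_left[simp]: "addt (zs (map snd t)) t = t"
  by (induction t) auto
lemma addt_neg[simp]: "addt t (neg t) = zs (map snd t)"
  by (induction t) auto

lemma F4':
  assumes "t1 \<noteq> []" "map snd t1 = map snd t2"
  shows "provable (Imp (Conj (Ge t1 c1) (Ge t2 c2)) (Ge (addt t1 t2) (c1 + c2)))"
proof -
  have len: "length t2 = length t1" using assms(2) by (metis length_map)
  have "axiom (Imp (Conj (Ge (zip (map fst t1) (map snd t1)) c1) (Ge (zip (map fst t2) (map snd t1)) c2))
                  (Ge (zip (map2 (+) (map fst t1) (map fst t2)) (map snd t1)) (c1 + c2)))"
    by (rule axiom.F4) (use assms len in auto)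
  moreover have "zip (map fst t2) (map snd t1) = t2" using assms(2) by (simp add: zip_map_fst_snd)
  moreover have "zip (map2 (+) (map fst t1) (map fst t2)) (map snd t1) = addt t1 t2"
    using len assms(2)
  proof (induction t1 arbitrary: t2)
    case (Cons p t1)
    then show ?case by (cases p; cases t2) auto
  qed simp
  ultimately show ?thesis by (simp add: zip_map_fst_snd provable.Ax)
qed

lemma F5':
  assumes "t \<noteq> []" "d > 0"
  shows "provable (Iff (Ge t c) (Ge (scale d t) (d * c)))"
proof -
  have "axiom (Iff (Ge (zip (map fst t) (map snd t)) c) (Ge (zip (map (\<lambda>a. d * a) (map fst t)) (map snd t)) (d * c)))"
    by (rule axiom.F5) (use assms in auto)
  moreover have "zip (map (\<lambda>a. d * a) (map fst t)) (map snd t) = scale d t"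
    by (induction t) (auto simp: scale_def)
  ultimately show ?thesis by (simp add: zip_map_fst_snd provable.Ax)
qed

lemma perm: "t \<noteq> [] \<Longrightarrow> mset t' = mset t \<Longrightarrow> provable (Imp (Ge t c) (Ge t' c))"
  by (rule iff_imp1, rule provable.Ax, rule axiom.F3)

lemma pad:
  assumes "t \<noteq> []"
  shows "provable (Imp (Ge t c) (Ge (t @ zs ws) c)) \<and> provable (Imp (Ge (t @ zs ws) c) (Ge t c))"
proof (induction ws rule: rev_induct)
  case Nil
  then show ?case using refl_imp assms by simp
next
  case (snoc w ws)
  have "provable (Iff (Ge (t @ zs ws) c) (Ge ((t @ zs ws) @ [(0, w)]) c))"
    by (rule provable.Ax, rule axiom.F2) (use assms in simp)
  then have i: "provable (Imp (Ge (t @ zs ws) c) (Ge (t @ zs (ws @ [w])) c))"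
    and j: "provable (Imp (Ge (t @ zs (ws @ [w])) c) (Ge (t @ zs ws) c))"
    using iff_imp1 iff_imp2 by simp_all
  show ?case
    using imp_trans[OF snoc[THEN conjunct1] i] imp_trans[OF j snoc[THEN conjunct2]] by simp
qed

lemma F1': "provable (Ge [(1, v), (-1, v)] 0)"
  by (rule provable.Ax, rule axiom.F1)

lemma Z2: "provable (Ge [(- b, v), (b, v)] 0)"
proof -
  consider "b > 0" | "b < 0" | "b = 0" by linarith
  then show ?thesis
  proof cases
    case 1
    have "provable (Iff (Ge [(1, v), (-1, v)] 0) (Ge (scale b [(1, v), (-1, v)]) (b * 0)))"
      by (rule F5') (use 1 in auto)
    moreover have "scale b [(1, v), (-1, v)] = [(b, v), (- b, v)]" by (simp add: scale_def)
    ultimately have "provable (Iff (Ge [(1, v), (-1, v)] 0) (Ge [(b, v), (- b, v)] 0))" by simp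
    then have "provable (Ge [(b, v), (- b, v)] 0)"
      using provable.MP[OF F1' iff_imp1] by blast
    moreover have "provable (Imp (Ge [(b, v), (- b, v)] 0) (Ge [(- b, v), (b, v)] 0))"
      by (rule perm) auto
    ultimately show ?thesis by (rule provable.MP)
  next
    case 2
    have "provable (Iff (Ge [(1, v), (-1, v)] 0) (Ge (scale (-b) [(1, v), (-1, v)]) ((-b) * 0)))"
      by (rule F5') (use 2 in auto)
    moreover have "scale (-b) [(1, v), (-1, v)] = [(- b, v), (b, v)]" by (simp add: scale_def)
    ultimately have "provable (Iff (Ge [(1, v), (-1, v)] 0) (Ge [(- b, v), (b, v)] 0))" by simp
    then show ?thesis
      using provable.MP[OF F1' iff_imp1] by blast
  next
    case 3
    have "provable (Imp (Ge [(1, v), (-1, v)] 0) (Ge [(-1, v), (1, v)] 0))"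
      by (rule perm) auto
    then have a: "provable (Ge [(-1, v), (1, v)] 0)"
      using F1' provable.MP by blast
    have "provable (Imp (Conj (Ge [(1, v), (-1, v)] 0) (Ge [(-1, v), (1, v)] 0))
       (Ge (addt [(1, v), (-1, v)] [(-1, v), (1, v)]) (0 + 0)))"
      by (rule F4') auto
    moreover have "addt [(1, v), (-1, v)] [(-1, v), (1, v)] = [(- b, v), (b, v)]" using 3 by simp
    ultimately have "provable (Imp (Conj (Ge [(1, v), (-1, v)] 0) (Ge [(-1, v), (1, v)] 0))
       (Ge [(- b, v), (b, v)] 0))" by simp
    then show ?thesis using mp2[OF F1' a] by blast
  qed
qed

lemma zero_lemma: "z \<noteq> [] \<Longrightarrow> (\<forall>v. lf z v = 0) \<Longrightarrow> provable (Ge z 0)"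
proof (induction z rule: length_induct)
  case (1 z)
  have IH: "\<And>ys. length ys < length z \<Longrightarrow> ys \<noteq> [] \<Longrightarrow> (\<forall>v. lf ys v = 0) \<Longrightarrow> provable (Ge ys 0)"
    using 1(1) by blast
  from 1(2) obtain a v r where z: "z = (a, v) # r" by (cases z) auto
  have lz: "\<And>w. lf z w = 0" using 1(3) by blast
  show ?case
  proof (cases "r = []")
    case True
    have "lf z v = a" using z True by simp
    then have a0: "a = 0" using lz by simp
    have "provable (Ge ([(0, v)] @ zs [v]) 0)" using Z2[of 0 v] by simp
    moreover have "provable (Imp (Ge ([(0, v)] @ zs [v]) 0) (Ge [(0, v)] 0))"
      using pad[of "[(0, v)]" 0 "[v]"] by simp
    ultimately show ?thesis using provable.MP True z a0 by blast
  next
    case rne: False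
    show ?thesis
    proof (cases "a = 0")
      case True
      have "lf r w = 0" for w using lz[of w] z True by simp
      then have "provable (Ge r 0)" using IH z rne by simp
      then have "provable (Ge (r @ zs [v]) 0)" using pad[OF rne, of 0 "[v]"] provable.MP by blast
      moreover have "provable (Imp (Ge (r @ zs [v]) 0) (Ge z 0))"
        by (rule perm) (use z True rne in auto)
      ultimately show ?thesis by (rule provable.MP)
    next
      case False
      have "lf z v = a + lf r v" using z by simp
      then have "lf r v \<noteq> 0" using lz[of v] False by simp
      then have "v \<in> snd ` set r" by (rule lf_nz)
      then obtain b where bv: "(b, v) \<in> set r" by auto
      define r' where "r' = remove1 (b, v) r"
      have mr: "mset r = mset ((b, v) # r')" using bv by (simp add: r'_def)
      define z' where "z' = (a + b, v) # r'"
      have lz': "lf z' w = 0" for w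
      proof -
        have "lf r w = lf ((b, v) # r') w" using lf_mset[OF mr] by blast
        then show ?thesis using lz[of w] by (cases "v = w") (simp_all add: z z'_def algebra_simps)
      qed
      have "length r' < length r" using bv length_pos_if_in_set[OF bv] by (simp add: r'_def length_remove1)
      then have "length z' < length z" by (simp add: z z'_def)
      then have "provable (Ge z' 0)" using IH lz' by (simp add: z'_def)
      moreover have "provable (Imp (Ge z' 0) (Ge (z' @ zs [v]) 0))" using pad[of z' 0 "[v]"]
        by (simp add: z'_def)
      ultimately have "provable (Ge (z' @ zs [v]) 0)" by (rule provable.MP)
      moreover have "provable (Imp (Ge (z' @ zs [v]) 0) (Ge ((a + b, v) # (0, v) # r') 0))"
        by (rule perm) (auto simp: z'_def)
      ultimately have A: "provable (Ge ((a + b, v) # (0, v) # r') 0)" by (rule provable.MP)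
      have "provable (Imp (Ge [(- b, v), (b, v)] 0) (Ge ([(- b, v), (b, v)] @ zs (map snd r')) 0))"
        using pad[of "[(- b, v), (b, v)]" 0 "map snd r'"] by simp
      then have "provable (Ge ([(- b, v), (b, v)] @ zs (map snd r')) 0)"
        using Z2 provable.MP by blast
      then have B: "provable (Ge ((- b, v) # (b, v) # zs (map snd r')) 0)" by simp
      have "provable (Imp (Conj (Ge ((a + b, v) # (0, v) # r') 0) (Ge ((- b, v) # (b, v) # zs (map snd r')) 0))
         (Ge (addt ((a + b, v) # (0, v) # r') ((- b, v) # (b, v) # zs (map snd r'))) (0 + 0)))"
        by (rule F4') auto
      moreover have "addt ((a + b, v) # (0, v) # r') ((- b, v) # (b, v) # zs (map snd r')) = (a, v) # (b, v) # r'"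
        by simp
      ultimately have "provable (Imp (Conj (Ge ((a + b, v) # (0, v) # r') 0) (Ge ((- b, v) # (b, v) # zs (map snd r')) 0))
         (Ge ((a, v) # (b, v) # r') 0))" by simp
      then have "provable (Ge ((a, v) # (b, v) # r') 0)" using mp2[OF A B] by blast
      moreover have "provable (Imp (Ge ((a, v) # (b, v) # r') 0) (Ge z 0))"
        by (rule perm) (use mr z in auto)
      ultimately show ?thesis by (rule provable.MP)
    qed
  qed
qed

lemma conj_right: "provable B \<Longrightarrow> provable (Imp (Conj A B) C) \<Longrightarrow> provable (Imp A C)"
proof -
  assume b: "provable B" and c: "provable (Imp (Conj A B) C)"
  have "wff (Imp A C)" using provable_wff[OF c] by simp
  then show ?thesis by (rule pc[where gs="[B, Imp (Conj A B) C]"]) (use b c in auto)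
qed

lemma conj_imp: "provable (Imp A A') \<Longrightarrow> provable (Imp B B') \<Longrightarrow> provable (Imp (Conj A' B') C)
  \<Longrightarrow> provable (Imp (Conj A B) C)"
proof -
  assume a: "provable (Imp A A')" and b: "provable (Imp B B')" and c: "provable (Imp (Conj A' B') C)"
  have "wff (Imp (Conj A B) C)" using provable_wff[OF c] provable_wff[OF a] provable_wff[OF b] by simp
  then show ?thesis by (rule pc[where gs="[Imp A A', Imp B B', Imp (Conj A' B') C]"]) (use a b c in auto)
qed

lemma equiv_lemma:
  assumes "t \<noteq> []" "t' \<noteq> []" "\<And>v. lf t v = lf t' v"
  shows "provable (Imp (Ge t c) (Ge t' c))"
proof -
  have s1: "provable (Imp (Ge t c) (Ge (t @ zs (map snd t')) c))" using pad[OF assms(1)] by blast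
  have Z: "provable (Ge (neg t @ t') 0)" by (rule zero_lemma) (use assms in auto)
  have "provable (Imp (Conj (Ge (t @ zs (map snd t')) c) (Ge (neg t @ t') 0))
     (Ge (addt (t @ zs (map snd t')) (neg t @ t')) (c + 0)))"
    by (rule F4') (use assms in auto)
  moreover have "addt (t @ zs (map snd t')) (neg t @ t') = zs (map snd t) @ t'"
    by (simp add: addt_append)
  ultimately have "provable (Imp (Conj (Ge (t @ zs (map snd t')) c) (Ge (neg t @ t') 0))
     (Ge (zs (map snd t) @ t') c))" by simp
  then have s2: "provable (Imp (Ge (t @ zs (map snd t')) c) (Ge (zs (map snd t) @ t') c))"
    using conj_right[OF Z] by blast
  have s3: "provable (Imp (Ge (zs (map snd t) @ t') c) (Ge (t' @ zs (map snd t)) c))"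
    by (rule perm) (use assms in auto)
  have s4: "provable (Imp (Ge (t' @ zs (map snd t)) c) (Ge t' c))" using pad[OF assms(2)] by blast
  show ?thesis using imp_trans[OF imp_trans[OF imp_trans[OF s1 s2] s3] s4] .
qed

lemma sum_rule:
  assumes "t \<noteq> []" "t' \<noteq> []" "u \<noteq> []" "\<And>v. lf u v = lf t v + lf t' v"
  shows "provable (Imp (Conj (Ge t c) (Ge t' c')) (Ge u (c + c')))"
proof -
  have s1: "provable (Imp (Ge t c) (Ge (t @ zs (map snd t')) c))" using pad[OF assms(1)] by blast
  have s2: "provable (Imp (Ge t' c') (Ge (zs (map snd t) @ t') c'))"
    by (rule equiv_lemma) (use assms in auto)
  have "provable (Imp (Conj (Ge (t @ zs (map snd t')) c) (Ge (zs (map snd t) @ t') c'))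
     (Ge (addt (t @ zs (map snd t')) (zs (map snd t) @ t')) (c + c')))"
    by (rule F4') (use assms in auto)
  moreover have "addt (t @ zs (map snd t')) (zs (map snd t) @ t') = t @ t'"
  proof -
    have "addt (t @ zs (map snd t')) (zs (map snd t) @ t') = addt t (zs (map snd t)) @ addt (zs (map snd t')) t'"
      by (rule addt_append) simp
    then show ?thesis by simp
  qed
  ultimately have s3: "provable (Imp (Conj (Ge (t @ zs (map snd t')) c) (Ge (zs (map snd t) @ t') c'))
     (Ge (t @ t') (c + c')))" by simp
  have s4: "provable (Imp (Ge (t @ t') (c + c')) (Ge u (c + c')))"
    by (rule equiv_lemma) (use assms in auto)
  show ?thesis using imp_trans[OF conj_imp[OF s1 s2 s3] s4] .
qed

lemma scale_rule:
  assumes "t \<noteq> []" "u \<noteq> []" "d > 0" "\<And>v. lf u v = d * lf t v"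
  shows "provable (Imp (Ge t c) (Ge u (d * c)))"
proof -
  have "provable (Imp (Ge t c) (Ge (scale d t) (d * c)))" using iff_imp1[OF F5'[OF assms(1,3)]] .
  moreover have "provable (Imp (Ge (scale d t) (d * c)) (Ge u (d * c)))"
    by (rule equiv_lemma) (use assms in auto)
  ultimately show ?thesis by (rule imp_trans)
qed

lemma weaken_rule:
  assumes "t \<noteq> []" "u \<noteq> []" "e \<le> c" "\<And>v. lf u v = lf t v"
  shows "provable (Imp (Ge t c) (Ge u e))"
proof -
  have "provable (Imp (Ge t c) (Ge t e))"
  proof (cases "e = c")
    case True
    then show ?thesis using refl_imp assms by simp
  next
    case False
    then have "e < c" using assms by simp
    then have "provable (Imp (Ge t c) (Gt t e))" by (intro provable.Ax axiom.F6 assms(1))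
    moreover have "provable (Imp (Gt t e) (Ge t e))"
      by (rule taut_provable) (use assms in \<open>auto simp: Gt_def Le_def\<close>)
    ultimately show ?thesis by (rule imp_trans)
  qed
  moreover have "provable (Imp (Ge t e) (Ge u e))"
    by (rule equiv_lemma) (use assms in auto)
  ultimately show ?thesis by (rule imp_trans)
qed

lemma contra_rule:
  assumes "t \<noteq> []" "c > 0" "\<And>v. lf t v = 0"
  shows "provable (Neg (Ge t c))"
proof -
  have a: "provable (Imp (Ge t c) (Gt t 0))" by (intro provable.Ax axiom.F6 assms(1,2))
  have b: "provable (Ge (neg t) 0)" by (rule zero_lemma) (use assms in auto)
  have "Gt t 0 = Conj (Ge t 0) (Neg (Ge (neg t) 0))" by (simp add: Gt_def Le_def neg_def)
  then have a': "provable (Imp (Ge t c) (Conj (Ge t 0) (Neg (Ge (neg t) 0))))" using a by simp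
  have "wff (Neg (Ge t c))" using assms by simp
  then show ?thesis by (rule pc[where gs="[Imp (Ge t c) (Conj (Ge t 0) (Neg (Ge (neg t) 0))), Ge (neg t) 0]"])
     (use a' b in auto)
qed

lemma hyp_imp: "provable (foldr Imp H A) \<Longrightarrow> provable (Imp A B) \<Longrightarrow> provable (foldr Imp H B)"
proof -
  assume a: "provable (foldr Imp H A)" and b: "provable (Imp A B)"
  have "wff (foldr Imp H B)" using provable_wff[OF a] provable_wff[OF b] by simp
  then show ?thesis by (rule pc[where gs="[foldr Imp H A, Imp A B]"]) (use a b in auto)
qed

lemma hyp_imp2: "provable (foldr Imp H A) \<Longrightarrow> provable (foldr Imp H B) \<Longrightarrow> provable (Imp (Conj A B) C)
  \<Longrightarrow> provable (foldr Imp H C)"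
proof -
  assume a: "provable (foldr Imp H A)" and b: "provable (foldr Imp H B)" and c: "provable (Imp (Conj A B) C)"
  have "wff (foldr Imp H C)" using provable_wff[OF a] provable_wff[OF c] by simp
  then show ?thesis by (rule pc[where gs="[foldr Imp H A, foldr Imp H B, Imp (Conj A B) C]"]) (use a b c in auto)
qed

lemma hyp_const: "provable B \<Longrightarrow> \<forall>h\<in>set H. wff h \<Longrightarrow> provable (foldr Imp H B)"
proof -
  assume a: "provable B" and w: "\<forall>h\<in>set H. wff h"
  have "wff (foldr Imp H B)" using provable_wff[OF a] w by simp
  then show ?thesis by (rule pc[where gs="[B]"]) (use a in auto)
qed

lemma hyp_mem: "h \<in> set H \<Longrightarrow> \<forall>h\<in>set H. wff h \<Longrightarrow> provable (foldr Imp H h)"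
  by (rule taut_provable) auto


section \<open>Fourier-Motzkin\<close>

type_synonym ineq = "lterm \<times> real \<times> bool"

definition holds :: "(nat \<Rightarrow> real) \<Rightarrow> ineq \<Rightarrow> bool" where
  "holds x q = (case q of (t, c, s) \<Rightarrow> if s then c < ev t x else c \<le> ev t x)"

inductive_set Dset :: "ineq set \<Rightarrow> ineq set" for S where
  mem: "q \<in> S \<Longrightarrow> q \<in> Dset S"
| scl: "(t, c, s) \<in> Dset S \<Longrightarrow> k > 0 \<Longrightarrow> (scale k t, k * c, s) \<in> Dset S"
| add: "(t1, c1, s1) \<in> Dset S \<Longrightarrow> (t2, c2, s2) \<in> Dset S \<Longrightarrow> (t1 @ t2, c1 + c2, s1 \<or> s2) \<in> Dset S"

lemma Dset_sub: "q \<in> Dset S' \<Longrightarrow> S' \<subseteq> Dset S \<Longrightarrow> q \<in> Dset S"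
  by (induction rule: Dset.induct) (auto intro: Dset.intros)

definition vars :: "ineq set \<Rightarrow> nat set" where
  "vars S = {v. \<exists>q\<in>S. lf (fst q) v \<noteq> 0}"

lemma finite_vars: "finite S \<Longrightarrow> finite (vars S)"
proof -
  assume "finite S"
  moreover have "vars S \<subseteq> (\<Union>q\<in>S. snd ` set (fst q))" unfolding vars_def using lf_nz by blast
  ultimately show ?thesis by (meson List.finite_set finite_UN_I finite_imageI finite_subset)
qed

definition comb :: "nat \<Rightarrow> ineq \<Rightarrow> ineq \<Rightarrow> ineq" where
  "comb v p n = (case p of (tp, cp, sp) \<Rightarrow> case n of (tn, cn, sn) \<Rightarrow>
     (scale (- lf tn v) tp @ scale (lf tp v) tn, - lf tn v * cp + lf tp v * cn, sp \<or> sn))"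

definition elim :: "nat \<Rightarrow> ineq set \<Rightarrow> ineq set" where
  "elim v S = {q\<in>S. lf (fst q) v = 0} \<union>
     (\<lambda>(p, n). comb v p n) ` ({p\<in>S. lf (fst p) v > 0} \<times> {n\<in>S. lf (fst n) v < 0})"

lemma finite_elim: "finite S \<Longrightarrow> finite (elim v S)"
  unfolding elim_def by auto

lemma elim_Dset: "elim v S \<subseteq> Dset S"
proof
  fix q assume "q \<in> elim v S"
  then consider "q \<in> S" | p n where "p \<in> S" "n \<in> S" "lf (fst p) v > 0" "lf (fst n) v < 0" "q = comb v p n"
    unfolding elim_def by auto
  then show "q \<in> Dset S"
  proof cases
    case 1
    then show ?thesis by (rule Dset.mem)
  next
    case 2
    obtain tp cp sp where p: "p = (tp, cp, sp)" by (cases p) auto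
    obtain tn cn sn where n: "n = (tn, cn, sn)" by (cases n) auto
    have "(scale (- lf tn v) tp, (- lf tn v) * cp, sp) \<in> Dset S"
      using 2 p n by (intro Dset.scl Dset.mem) auto
    moreover have "(scale (lf tp v) tn, (lf tp v) * cn, sn) \<in> Dset S"
      using 2 p n by (intro Dset.scl Dset.mem) auto
    ultimately have "(scale (- lf tn v) tp @ scale (lf tp v) tn, (- lf tn v) * cp + (lf tp v) * cn, sp \<or> sn) \<in> Dset S"
      by (rule Dset.add)
    then show ?thesis using 2 p n by (simp add: comb_def)
  qed
qed

lemma vars_elim: "vars (elim v S) \<subseteq> vars S - {v}"
proof
  fix w assume "w \<in> vars (elim v S)"
  then obtain q where q: "q \<in> elim v S" "lf (fst q) w \<noteq> 0" unfolding vars_def by auto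
  then consider "q \<in> S" "lf (fst q) v = 0" | p n where "p \<in> S" "n \<in> S" "lf (fst p) v > 0" "lf (fst n) v < 0" "q = comb v p n"
    unfolding elim_def by auto
  then show "w \<in> vars S - {v}"
  proof cases
    case 1
    then show ?thesis using q unfolding vars_def by auto
  next
    case 2
    obtain tp cp sp where p: "p = (tp, cp, sp)" by (cases p) auto
    obtain tn cn sn where n: "n = (tn, cn, sn)" by (cases n) auto
    have lw: "lf (fst q) u = - lf tn v * lf tp u + lf tp v * lf tn u" for u
      using 2 p n by (simp add: comb_def)
    have "w \<noteq> v" using q(2) lw[of v] by (auto simp: algebra_simps)
    moreover have "lf tp w \<noteq> 0 \<or> lf tn w \<noteq> 0" using q(2) lw[of w] by auto
    ultimately show ?thesis using 2 p n unfolding vars_def by force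
  qed
qed

lemma bnd_le:
  fixes ap an X Y :: real
  assumes "ap > 0" "an < 0" "- an * X + ap * Y \<le> 0"
  shows "X / ap \<le> Y / an"
proof -
  have neg: "ap * an < 0" using assms by (simp add: mult_pos_neg)
  have "X / ap = (X * an) / (ap * an)" using assms by simp
  also have "\<dots> \<le> (Y * ap) / (ap * an)"
    using assms by (intro divide_right_mono_neg) (use neg in \<open>auto simp: algebra_simps\<close>)
  also have "\<dots> = Y / an" using assms by simp
  finally show ?thesis .
qed

lemma bnd_less:
  fixes ap an X Y :: real
  assumes "ap > 0" "an < 0" "- an * X + ap * Y < 0"
  shows "X / ap < Y / an"
proof -
  have neg: "ap * an < 0" using assms by (simp add: mult_pos_neg)
  have "X / ap = (X * an) / (ap * an)" using assms by simp
  also have "\<dots> < (Y * ap) / (ap * an)"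
    using assms by (intro divide_strict_right_mono_neg) (use neg in \<open>auto simp: algebra_simps\<close>)
  also have "\<dots> = Y / an" using assms by simp
  finally show ?thesis .
qed

lemma fm_ext:
  assumes fin: "finite S" and h: "\<forall>q\<in>elim v S. holds x q"
  shows "\<exists>y. \<forall>q\<in>S. holds (x(v := y)) q"
proof -
  define a where "a (q :: ineq) = lf (fst q) v" for q
  define r where "r (q :: ineq) = ev (fst q) x - a q * x v" for q
  define bnd where "bnd (q :: ineq) = (fst (snd q) - r q) / a q" for q
  have hupd: "holds (x(v := y)) q \<longleftrightarrow> (if snd (snd q) then fst (snd q) < r q + a q * y
      else fst (snd q) \<le> r q + a q * y)" for q y
    by (cases q) (simp add: holds_def ev_upd r_def a_def algebra_simps)
  have key: "bnd p \<le> bnd n \<and> (snd (snd p) \<or> snd (snd n) \<longrightarrow> bnd p < bnd n)"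
    if pn: "p \<in> S" "n \<in> S" "a p > 0" "a n < 0" for p n
  proof -
    obtain tp cp sp where p: "p = (tp, cp, sp)" by (cases p) auto
    obtain tn cn sn where n: "n = (tn, cn, sn)" by (cases n) auto
    have "comb v p n \<in> elim v S" using pn unfolding elim_def a_def by force
    then have hc: "holds x (comb v p n)" using h by blast
    have cb: "comb v p n = (scale (- lf tn v) tp @ scale (lf tp v) tn, - lf tn v * cp + lf tp v * cn, sp \<or> sn)"
      using p n by (simp add: comb_def)
    have ap: "a p = lf tp v" and an: "a n = lf tn v" using p n by (simp_all add: a_def)
    have rp: "ev tp x = r p + lf tp v * x v" and rn: "ev tn x = r n + lf tn v * x v"
      using p n by (simp_all add: r_def a_def)
    have evc: "ev (scale (- lf tn v) tp @ scale (lf tp v) tn) x = - lf tn v * r p + lf tp v * r n"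
      unfolding ev_append ev_scale rp rn by (simp add: algebra_simps)
    then have hc': "if sp \<or> sn then - a n * cp + a p * cn < - a n * r p + a p * r n
        else - a n * cp + a p * cn \<le> - a n * r p + a p * r n"
      using hc unfolding cb holds_def prod.case evc ap an by simp
    have b1: "bnd p = (cp - r p) / a p" "bnd n = (cn - r n) / a n" using p n by (simp_all add: bnd_def)
    show ?thesis
    proof (cases "sp \<or> sn")
      case True
      then have "- a n * (cp - r p) + a p * (cn - r n) < 0" using hc' by (simp add: algebra_simps)
      then have "bnd p < bnd n" unfolding b1 using pn by (intro bnd_less) auto
      then show ?thesis by simp
    next
      case False
      then have "- a n * (cp - r p) + a p * (cn - r n) \<le> 0" using hc' by (simp add: algebra_simps)
      then have "bnd p \<le> bnd n" unfolding b1 using pn by (intro bnd_le) auto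
      then show ?thesis using False p n by simp
    qed
  qed
  define L where "L = bnd ` {q\<in>S. a q > 0}"
  define U where "U = bnd ` {q\<in>S. a q < 0}"
  have finL: "finite L" and finU: "finite U" using fin by (simp_all add: L_def U_def)
  define y where "y = (if L = {} then (if U = {} then 0 else Min U - 1)
    else if U = {} then Max L + 1 else (Max L + Min U) / 2)"
  have LU: "Max L \<le> Min U" if ne: "L \<noteq> {}" "U \<noteq> {}"
  proof -
    obtain p where "p \<in> S" "a p > 0" "bnd p = Max L" using Max_in[OF finL ne(1)] unfolding L_def by auto
    moreover obtain n where "n \<in> S" "a n < 0" "bnd n = Min U" using Min_in[OF finU ne(2)] unfolding U_def by auto
    ultimately show ?thesis using key by metis
  qed
  have "holds (x(v := y)) q" if q: "q \<in> S" for q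
  proof -
    consider "a q = 0" | "a q > 0" | "a q < 0" by linarith
    then show ?thesis
    proof cases
      case 1
      then have "q \<in> elim v S" using q unfolding elim_def a_def by auto
      then have "holds x q" using h by blast
      then show ?thesis using 1 by (cases q) (simp add: holds_def ev_upd a_def)
    next
      case 2
      have bL: "bnd q \<in> L" using q 2 unfolding L_def by auto
      then have LneL: "L \<noteq> {}" by auto
      have le: "bnd q \<le> Max L" using Max_ge[OF finL bL] .
      have goal: "bnd q \<le> y \<and> (snd (snd q) \<longrightarrow> bnd q < y)"
      proof (cases "U = {}")
        case True
        then show ?thesis using le LneL by (simp add: y_def)
      next
        case False
        obtain n where n: "n \<in> S" "a n < 0" "bnd n = Min U" using Min_in[OF finU False] unfolding U_def by auto
        have "bnd q \<le> Min U \<and> (snd (snd q) \<longrightarrow> bnd q < Min U)" using key[OF q n(1) 2 n(2)] n(3) by auto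
        then show ?thesis using le LneL False LU[OF LneL False] by (auto simp: y_def)
      qed
      have "fst (snd q) - r q \<le> a q * y \<and> (snd (snd q) \<longrightarrow> fst (snd q) - r q < a q * y)"
        using goal 2 unfolding bnd_def by (simp add: pos_divide_le_eq pos_divide_less_eq mult.commute)
      then show ?thesis unfolding hupd by auto
    next
      case 3
      have bU: "bnd q \<in> U" using q 3 unfolding U_def by auto
      then have UneU: "U \<noteq> {}" by auto
      have ge: "Min U \<le> bnd q" using Min_le[OF finU bU] .
      have goal: "y \<le> bnd q \<and> (snd (snd q) \<longrightarrow> y < bnd q)"
      proof (cases "L = {}")
        case True
        then show ?thesis using ge UneU by (simp add: y_def)
      next
        case False
        obtain p where p: "p \<in> S" "a p > 0" "bnd p = Max L" using Max_in[OF finL False] unfolding L_def by auto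
        have "Max L \<le> bnd q \<and> (snd (snd q) \<longrightarrow> Max L < bnd q)" using key[OF p(1) q p(2) 3] p(3) by auto
        then show ?thesis using ge UneU False LU[OF False UneU] by (auto simp: y_def)
      qed
      have "a q * y \<ge> fst (snd q) - r q \<and> (snd (snd q) \<longrightarrow> a q * y > fst (snd q) - r q)"
        using goal 3 unfolding bnd_def by (simp add: neg_le_divide_eq neg_less_divide_eq mult.commute)
      then show ?thesis unfolding hupd by auto
    qed
  qed
  then show ?thesis by blast
qed

lemma ev_zero[simp]: "ev t (\<lambda>_. 0) = 0"
proof (induction t)
  case (Cons p t)
  then show ?case by (cases p) simp
qed simp

theorem motzkin:
  "finite S \<Longrightarrow> \<not> (\<exists>x. \<forall>q\<in>S. holds x q) \<Longrightarrow>
    \<exists>t c s. (t, c, s) \<in> Dset S \<and> (\<forall>v. lf t v = 0) \<and> (0 < c \<or> (0 \<le> c \<and> s))"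
proof (induction "card (vars S)" arbitrary: S rule: less_induct)
  case less
  show ?case
  proof (cases "vars S = {}")
    case True
    obtain q where q: "q \<in> S" "\<not> holds (\<lambda>_. 0) q" using less.prems(2) by blast
    obtain t c s where qq: "q = (t, c, s)" by (cases q) auto
    have "\<forall>v. lf t v = 0" using True q(1) qq unfolding vars_def by force
    moreover have "0 < c \<or> (0 \<le> c \<and> s)" using q(2) qq by (auto simp: holds_def split: if_splits)
    ultimately show ?thesis using Dset.mem[OF q(1)] qq by blast
  next
    case False
    then obtain v where v: "v \<in> vars S" by auto
    have fin': "finite (elim v S)" using finite_elim[OF less.prems(1)] .
    have sub: "vars (elim v S) \<subset> vars S" using vars_elim[of v S] v by blast
    have card: "card (vars (elim v S)) < card (vars S)"
      using psubset_card_mono[OF finite_vars[OF less.prems(1)] sub] .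
    have "\<not> (\<exists>x. \<forall>q\<in>elim v S. holds x q)"
      using fm_ext[OF less.prems(1)] less.prems(2) by blast
    then obtain t c s where "(t, c, s) \<in> Dset (elim v S)" "\<forall>v. lf t v = 0" "0 < c \<or> (0 \<le> c \<and> s)"
      using less.hyps[OF card fin'] by blast
    then show ?thesis using Dset_sub[OF _ elim_Dset] by blast
  qed
qed


definition PosS :: "(lterm \<times> real) list \<Rightarrow> ineq set" where
  "PosS P = (\<lambda>(t, c). (t, c, False)) ` set P"

definition hyps :: "(lterm \<times> real) list \<Rightarrow> fm list" where
  "hyps P = map (\<lambda>(t, c). Ge t c) P"

lemma wff_hyps: "\<forall>(t, c)\<in>set P. t \<noteq> [] \<Longrightarrow> \<forall>h\<in>set (hyps P). wff h"
  by (auto simp: hyps_def)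

lemma nostrict: "(t, c, s) \<in> Dset S \<Longrightarrow> \<forall>q\<in>S. \<not> snd (snd q) \<Longrightarrow> \<not> s"
  by (induction rule: Dset.induct[split_format(complete)]) auto

lemma lf_pad0[simp]: "lf (t @ [(0, 0)]) v = lf t v" by simp

lemma sum_hyp:
  assumes "provable (foldr Imp H (Ge u1 e1))" "provable (foldr Imp H (Ge u2 e2))"
    "u1 \<noteq> []" "u2 \<noteq> []" "u \<noteq> []" "\<forall>v. lf u v = lf u1 v + lf u2 v" "e = e1 + e2"
  shows "provable (foldr Imp H (Ge u e))"
proof -
  have "provable (Imp (Conj (Ge u1 e1) (Ge u2 e2)) (Ge u (e1 + e2)))"
    by (rule sum_rule) (use assms in auto)
  then show ?thesis using hyp_imp2[OF assms(1,2)] assms(7) by simp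
qed

lemma dset_prov:
  assumes "(t, c, s) \<in> Dset (PosS P \<union> Q)" "Q \<subseteq> {(neg s0, - d0, True)}"
    "\<forall>(t, c)\<in>set P. t \<noteq> []" "s0 \<noteq> []"
  shows "(\<not> s \<longrightarrow> (\<forall>u. u \<noteq> [] \<longrightarrow> (\<forall>v. lf u v = lf t v) \<longrightarrow> provable (foldr Imp (hyps P) (Ge u c))))
       \<and> (s \<longrightarrow> (\<exists>k>0. \<forall>u. u \<noteq> [] \<longrightarrow> (\<forall>v. lf u v = lf t v + k * lf s0 v) \<longrightarrow>
              provable (foldr Imp (hyps P) (Ge u (c + k * d0)))))"
  using assms(1)
proof (induction rule: Dset.induct[split_format(complete)])
  case (mem t c s)
  show ?case
  proof (cases "(t, c, s) \<in> PosS P")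
    case True
    then have tc: "(t, c) \<in> set P" "\<not> s" by (auto simp: PosS_def)
    have hm: "provable (foldr Imp (hyps P) (Ge t c))"
      by (rule hyp_mem) (use tc wff_hyps[OF assms(3)] in \<open>auto simp: hyps_def\<close>)
    have "t \<noteq> []" using tc assms(3) by auto
    then show ?thesis using tc hyp_imp[OF hm equiv_lemma] by auto
  next
    case False
    then have q: "t = neg s0" "c = - d0" "s" using mem assms(2) by auto
    have "provable (foldr Imp (hyps P) (Ge u (c + 1 * d0)))"
      if "u \<noteq> []" "\<forall>v. lf u v = lf t v + 1 * lf s0 v" for u
    proof -
      have "provable (Ge u 0)" by (rule zero_lemma) (use that q in auto)
      then show ?thesis using hyp_const wff_hyps[OF assms(3)] q by simp
    qed
    then show ?thesis using q(3) by (intro conjI impI) (simp, rule exI[of _ 1], simp)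
  qed
next
  case (scl t c s k)
  show ?case
  proof (cases s)
    case False
    have "provable (foldr Imp (hyps P) (Ge u (k * c)))"
      if u: "u \<noteq> []" "\<forall>v. lf u v = lf (scale k t) v" for u
    proof -
      have "provable (foldr Imp (hyps P) (Ge (t @ [(0, 0)]) c))" using scl.IH False by simp
      moreover have "provable (Imp (Ge (t @ [(0, 0)]) c) (Ge u (k * c)))"
        by (rule scale_rule) (use u scl.hyps(2) in auto)
      ultimately show ?thesis by (rule hyp_imp)
    qed
    then show ?thesis using False by simp
  next
    case True
    then obtain k' where k': "k' > 0" "\<forall>u. u \<noteq> [] \<longrightarrow> (\<forall>v. lf u v = lf t v + k' * lf s0 v) \<longrightarrow>
              provable (foldr Imp (hyps P) (Ge u (c + k' * d0)))" using scl.IH by blast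
    have "provable (foldr Imp (hyps P) (Ge u (k * c + (k * k') * d0)))"
      if u: "u \<noteq> []" "\<forall>v. lf u v = lf (scale k t) v + (k * k') * lf s0 v" for u
    proof -
      have "provable (foldr Imp (hyps P) (Ge (t @ scale k' s0) (c + k' * d0)))"
        using k' assms(4) by simp
      moreover have "provable (Imp (Ge (t @ scale k' s0) (c + k' * d0)) (Ge u (k * (c + k' * d0))))"
        by (rule scale_rule) (use u scl.hyps(2) assms(4) in \<open>auto simp: algebra_simps\<close>)
      ultimately have "provable (foldr Imp (hyps P) (Ge u (k * (c + k' * d0))))" by (rule hyp_imp)
      moreover have "k * (c + k' * d0) = k * c + (k * k') * d0" by (simp add: algebra_simps)
      ultimately show ?thesis by simp
    qed
    moreover have "k * k' > 0" using k' scl.hyps(2) by simp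
    ultimately show ?thesis using True by auto
  qed
next
  case (add t1 c1 s1 t2 c2 s2)
  have ne0: "t1 @ [(0, 0)] \<noteq> []" "t2 @ [(0, 0)] \<noteq> []" "t1 @ scale k s0 \<noteq> []" "t2 @ scale k s0 \<noteq> []" for k
    using assms(4) by auto
  consider "\<not> s1" "\<not> s2" | "s1" "\<not> s2" | "\<not> s1" "s2" | "s1" "s2" by blast
  then show ?case
  proof cases
    case 1
    have h1: "provable (foldr Imp (hyps P) (Ge (t1 @ [(0, 0)]) c1))" using add.IH(1) 1 by simp
    have h2: "provable (foldr Imp (hyps P) (Ge (t2 @ [(0, 0)]) c2))" using add.IH(2) 1 by simp
    show ?thesis using 1 sum_hyp[OF h1 h2 ne0(1,2)] by simp
  next
    case 2
    then obtain k where k: "k > 0" "\<forall>u. u \<noteq> [] \<longrightarrow> (\<forall>v. lf u v = lf t1 v + k * lf s0 v) \<longrightarrow>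
              provable (foldr Imp (hyps P) (Ge u (c1 + k * d0)))" using add.IH(1) by blast
    have h1: "provable (foldr Imp (hyps P) (Ge (t1 @ scale k s0) (c1 + k * d0)))" using k ne0 by simp
    have h2: "provable (foldr Imp (hyps P) (Ge (t2 @ [(0, 0)]) c2))" using add.IH(2) 2 by simp
    have "provable (foldr Imp (hyps P) (Ge u (c1 + c2 + k * d0)))"
      if "u \<noteq> []" "\<forall>v. lf u v = lf (t1 @ t2) v + k * lf s0 v" for u
      using sum_hyp[OF h1 h2 ne0(3,2) that(1)] that(2) by (simp add: algebra_simps)
    then show ?thesis using 2 k(1) by auto
  next
    case 3
    then obtain k where k: "k > 0" "\<forall>u. u \<noteq> [] \<longrightarrow> (\<forall>v. lf u v = lf t2 v + k * lf s0 v) \<longrightarrow>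
              provable (foldr Imp (hyps P) (Ge u (c2 + k * d0)))" using add.IH(2) by blast
    have h2: "provable (foldr Imp (hyps P) (Ge (t2 @ scale k s0) (c2 + k * d0)))" using k ne0 by simp
    have h1: "provable (foldr Imp (hyps P) (Ge (t1 @ [(0, 0)]) c1))" using add.IH(1) 3 by simp
    have "provable (foldr Imp (hyps P) (Ge u (c1 + c2 + k * d0)))"
      if "u \<noteq> []" "\<forall>v. lf u v = lf (t1 @ t2) v + k * lf s0 v" for u
      using sum_hyp[OF h1 h2 ne0(1,4) that(1)] that(2) by (simp add: algebra_simps)
    then show ?thesis using 3 k(1) by auto
  next
    case 4
    obtain k1 where k1: "k1 > 0" "\<forall>u. u \<noteq> [] \<longrightarrow> (\<forall>v. lf u v = lf t1 v + k1 * lf s0 v) \<longrightarrow>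
              provable (foldr Imp (hyps P) (Ge u (c1 + k1 * d0)))" using add.IH(1) 4 by blast
    obtain k2 where k2: "k2 > 0" "\<forall>u. u \<noteq> [] \<longrightarrow> (\<forall>v. lf u v = lf t2 v + k2 * lf s0 v) \<longrightarrow>
              provable (foldr Imp (hyps P) (Ge u (c2 + k2 * d0)))" using add.IH(2) 4 by blast
    have h1: "provable (foldr Imp (hyps P) (Ge (t1 @ scale k1 s0) (c1 + k1 * d0)))" using k1 ne0 by simp
    have h2: "provable (foldr Imp (hyps P) (Ge (t2 @ scale k2 s0) (c2 + k2 * d0)))" using k2 ne0 by simp
    have "provable (foldr Imp (hyps P) (Ge u (c1 + c2 + (k1 + k2) * d0)))"
      if "u \<noteq> []" "\<forall>v. lf u v = lf (t1 @ t2) v + (k1 + k2) * lf s0 v" for u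
      using sum_hyp[OF h1 h2 ne0(3,4) that(1)] that(2) by (simp add: algebra_simps)
    moreover have "k1 + k2 > 0" using k1 k2 by simp
    ultimately show ?thesis using 4 by auto
  qed
qed

definition lit :: "bool \<times> lterm \<times> real \<Rightarrow> fm" where
  "lit l = (case l of (b, t, c) \<Rightarrow> if b then Ge t c else Neg (Ge t c))"

definition Fls :: fm where "Fls = Neg (Ge [(1, 0), (-1, 0)] 0)"

lemma wff_lit: "\<forall>(b, t, c)\<in>set L. t \<noteq> [] \<Longrightarrow> \<forall>h\<in>set (map lit L). wff h"
  by (auto simp: lit_def)

lemma core:
  fixes L :: "(bool \<times> lterm \<times> real) list"
  assumes ne: "\<forall>(b, t, c)\<in>set L. t \<noteq> []" and inf: "infinite (UNIV :: 'd set)"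
    and unsat: "\<not> (\<exists>(D :: 'd set) \<sigma>. D \<noteq> {} \<and> (\<forall>l\<in>set L. sat D \<sigma> (lit l)))"
  shows "provable (foldr Imp (map lit L) Fls)"
proof -
  define P where "P = map snd (filter fst L)"
  define N where "N = map snd (filter (Not \<circ> fst) L)"
  define good where "good x = (\<forall>(t, c)\<in>set P. c \<le> ev t x)" for x
  have neP: "\<forall>(t, c)\<in>set P. t \<noteq> []" using ne by (auto simp: P_def)
  have PL: "(True, t, c) \<in> set L" if "(t, c) \<in> set P" for t c using that by (auto simp: P_def)
  have NL: "(False, t, c) \<in> set L" if "(t, c) \<in> set N" for t c using that by (auto simp: N_def)
  have hypsL: "set (hyps P) \<subseteq> set (map lit L)"
    using PL by (force simp: hyps_def lit_def)
  have wffT: "wff (foldr Imp (map lit L) Fls)" using wff_lit[OF ne] by (simp add: Fls_def)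
  have semantic: "(\<not> (\<exists>x. good x)) \<or> (\<exists>(s0, d0)\<in>set N. \<not> (\<exists>x. good x \<and> ev s0 x < d0))"
  proof (rule ccontr)
    assume "\<not> ?thesis"
    then obtain x0 where x0: "good x0"
      and ex: "\<forall>j<length N. \<exists>x. good x \<and> ev (fst (N ! j)) x < snd (N ! j)"
      by (auto simp: case_prod_beta)
    then have "\<forall>j. \<exists>x. j < length N \<longrightarrow> good x \<and> ev (fst (N ! j)) x < snd (N ! j)" by auto
    then obtain X where X: "\<And>j. j < length N \<Longrightarrow> good (X j) \<and> ev (fst (N ! j)) (X j) < snd (N ! j)"
      by metis
    define pt where "pt i = (if i = 0 then x0 else X (i - 1))" for i
    obtain g :: "nat \<Rightarrow> 'd" where g: "inj g" using infinite_countable_subset[OF inf] by blast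
    define \<sigma> where "\<sigma> v y = pt (inv g y) v" for v y
    define D where "D = g ` {..length N}"
    have tv: "tval t \<sigma> (g i) = ev t (pt i)" for t i
      by (simp add: tval_ev \<sigma>_def inv_f_f[OF g])
    have gp: "good (pt i)" if "i \<le> length N" for i
      using x0 X that by (auto simp: pt_def)
    have "\<forall>l\<in>set L. sat D \<sigma> (lit l)"
    proof
      fix l assume l: "l \<in> set L"
      obtain b t c where lb: "l = (b, t, c)" by (cases l) auto
      show "sat D \<sigma> (lit l)"
      proof (cases b)
        case True
        then have "(t, c) \<in> set P" using l lb by (force simp: P_def)
        then have "c \<le> tval t \<sigma> y" if "y \<in> D" for y
          using that gp tv unfolding D_def good_def by fastforce
        then show ?thesis using True lb by (simp add: lit_def)
      next
        case False
        then have "(t, c) \<in> set N" using l lb by (force simp: N_def)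
        then obtain j where j: "j < length N" "N ! j = (t, c)" by (metis in_set_conv_nth)
        have "g (Suc j) \<in> D" using j by (simp add: D_def)
        moreover have "tval t \<sigma> (g (Suc j)) < c" using X[OF j(1)] j(2) tv by (simp add: pt_def)
        ultimately show ?thesis using False lb by (auto simp: lit_def not_le)
      qed
    qed
    moreover have "D \<noteq> {}" by (simp add: D_def)
    ultimately show False using unsat by blast
  qed
  have finP: "finite (PosS P)" by (simp add: PosS_def)
  have holdsP: "holds x q \<longleftrightarrow> fst (snd q) \<le> ev (fst q) x" if "q \<in> PosS P" for x q
    using that by (auto simp: PosS_def holds_def)
  have goodP: "(\<forall>q\<in>PosS P. holds x q) \<longleftrightarrow> good x" for x
    by (auto simp: PosS_def holds_def good_def)
  have nonstrict: "provable (foldr Imp (map lit L) Fls)"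
    if "(t, c, False) \<in> Dset (PosS P \<union> Q)" "Q \<subseteq> {(neg s0, - d0, True)}" "s0 \<noteq> []"
       "\<forall>v. lf t v = 0" "0 < c" for t c Q s0 d0
  proof -
    have a: "provable (foldr Imp (hyps P) (Ge (t @ [(0, 0)]) c))"
      using dset_prov[OF that(1,2) neP that(3)] by simp
    have b: "provable (Neg (Ge (t @ [(0, 0)]) c))" by (rule contra_rule) (use that in auto)
    show ?thesis
      by (rule pc[OF wffT, where gs="[foldr Imp (hyps P) (Ge (t @ [(0, 0)]) c), Neg (Ge (t @ [(0, 0)]) c)]"])
        (use a b hypsL in auto)
  qed
  from semantic show ?thesis
  proof
    assume A: "\<not> (\<exists>x. good x)"
    obtain t c s where cert: "(t, c, s) \<in> Dset (PosS P)" "\<forall>v. lf t v = 0" "0 < c \<or> (0 \<le> c \<and> s)"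
      using motzkin[OF finP] A goodP by blast
    have "\<not> s" by (rule nostrict[OF cert(1)]) (auto simp: PosS_def)
    then show ?thesis using nonstrict[of t c "{}" "[(1, 0)]" 0] cert by simp
  next
    assume "\<exists>(s0, d0)\<in>set N. \<not> (\<exists>x. good x \<and> ev s0 x < d0)"
    then obtain s0 d0 where sd: "(s0, d0) \<in> set N" "\<not> (\<exists>x. good x \<and> ev s0 x < d0)" by blast
    have s0ne: "s0 \<noteq> []" using NL[OF sd(1)] ne by auto
    let ?S = "PosS P \<union> {(neg s0, - d0, True)}"
    have "\<not> (\<exists>x. \<forall>q\<in>?S. holds x q)" using sd(2) goodP by (auto simp: holds_def)
    then obtain t c s where cert: "(t, c, s) \<in> Dset ?S" "\<forall>v. lf t v = 0" "0 < c \<or> (0 \<le> c \<and> s)"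
      using motzkin[of ?S] finP by blast
    show ?thesis
    proof (cases s)
      case False
      then show ?thesis using nonstrict[of t c "{(neg s0, - d0, True)}" s0 d0] cert s0ne by simp
    next
      case True
      obtain k where k: "k > 0" "\<forall>u. u \<noteq> [] \<longrightarrow> (\<forall>v. lf u v = lf t v + k * lf s0 v) \<longrightarrow>
              provable (foldr Imp (hyps P) (Ge u (c + k * d0)))"
        using dset_prov[OF cert(1) _ neP s0ne] True by blast
      have c0: "0 \<le> c" using cert(3) by auto
      have h1: "provable (foldr Imp (hyps P) (Ge (scale k s0) (c + k * d0)))"
        using k cert(2) s0ne by simp
      have h2: "provable (Imp (Ge (scale k s0) (c + k * d0)) (Ge s0 ((1 / k) * (c + k * d0))))"
        by (rule scale_rule) (use k s0ne in auto)
      have "d0 \<le> (1 / k) * (c + k * d0)" using k(1) c0 by (simp add: field_simps)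
      then have h3: "provable (Imp (Ge s0 ((1 / k) * (c + k * d0))) (Ge s0 d0))"
        by (intro weaken_rule s0ne) auto
      have h: "provable (foldr Imp (hyps P) (Ge s0 d0))" using hyp_imp[OF hyp_imp[OF h1 h2] h3] .
      have nl: "lit (False, s0, d0) \<in> set (map lit L)" using NL[OF sd(1)] by simp
      show ?thesis
      proof (rule pc[OF wffT, where gs="[foldr Imp (hyps P) (Ge s0 d0)]"])
        show "\<forall>g\<in>set [foldr Imp (hyps P) (Ge s0 d0)]. provable g" using h by simp
      next
        fix \<beta> assume "\<forall>g\<in>set [foldr Imp (hyps P) (Ge s0 d0)]. feval \<beta> g"
        then have 1: "(\<forall>h\<in>set (hyps P). feval \<beta> h) \<longrightarrow> \<beta> s0 d0" by simp
        show "feval \<beta> (foldr Imp (map lit L) Fls)"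
        proof (simp only: feval_foldr, intro impI)
          assume all: "\<forall>h\<in>set (map lit L). feval \<beta> h"
          then have "\<beta> s0 d0" using 1 hypsL by blast
          moreover have "feval \<beta> (lit (False, s0, d0))" using all nl by blast
          ultimately show "feval \<beta> Fls" by (simp add: lit_def)
        qed
      qed
    qed
  qed
qed

lemma wff_atoms: "wff f \<Longrightarrow> \<forall>(t, c)\<in>set (atoms f). t \<noteq> []"
  by (induction f) auto

lemma compl_aux:
  assumes wf: "wff f" and val: "valid TYPE('d) f" and inf: "infinite (UNIV :: 'd set)"
  shows "\<forall>(t, c)\<in>set As. t \<noteq> [] \<Longrightarrow> \<forall>(b, t, c)\<in>set L. t \<noteq> [] \<Longrightarrow>
    set (atoms f) \<subseteq> set As \<union> snd ` set L \<Longrightarrow> provable (foldr Imp (map lit L) f)"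
proof (induction As arbitrary: L)
  case Nil
  have wffT: "wff (foldr Imp (map lit L) f)" using wff_lit[OF Nil(2)] wf by simp
  show ?case
  proof (cases "\<forall>\<beta>. (\<forall>l\<in>set L. feval \<beta> (lit l)) \<longrightarrow> feval \<beta> f")
    case True
    then show ?thesis by (intro taut_provable wffT) auto
  next
    case False
    then obtain \<beta> where \<beta>: "\<forall>l\<in>set L. feval \<beta> (lit l)" "\<not> feval \<beta> f" by blast
    have unsat: "\<not> (\<exists>(D :: 'd set) \<sigma>. D \<noteq> {} \<and> (\<forall>l\<in>set L. sat D \<sigma> (lit l)))"
    proof
      assume "\<exists>(D :: 'd set) \<sigma>. D \<noteq> {} \<and> (\<forall>l\<in>set L. sat D \<sigma> (lit l))"
      then obtain D :: "'d set" and \<sigma> where D: "D \<noteq> {}" "\<forall>l\<in>set L. sat D \<sigma> (lit l)" by blast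
      define \<gamma> where "\<gamma> t c = sat D \<sigma> (Ge t c)" for t c
      have "\<beta> t c = \<gamma> t c" if tc: "(t, c) \<in> set (atoms f)" for t c
      proof -
        obtain b where bl: "(b, t, c) \<in> set L" using tc Nil(3) by force
        have "feval \<beta> (lit (b, t, c))" using \<beta>(1) bl by blast
        moreover have "sat D \<sigma> (lit (b, t, c))" using D(2) bl by blast
        then have "feval \<gamma> (lit (b, t, c))" using sat_feval[of D \<sigma> "lit (b, t, c)"] unfolding \<gamma>_def by simp
        ultimately show ?thesis by (cases b) (auto simp: lit_def)
      qed
      then have "feval \<beta> f = feval \<gamma> f" by (intro feval_cong) auto
      moreover have "sat D \<sigma> f" using val D(1) unfolding valid_def by blast
      ultimately show False using \<beta>(2) sat_feval[of D \<sigma> f] unfolding \<gamma>_def by simp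
    qed
    have a: "provable (foldr Imp (map lit L) Fls)" by (rule core[OF Nil(2) inf unsat])
    show ?thesis
      by (rule pc[OF wffT, where gs="[foldr Imp (map lit L) Fls, Ge [(1, 0), (-1, 0)] 0]"])
        (use a F1' in \<open>auto simp: Fls_def\<close>)
  qed
next
  case (Cons a As)
  obtain t c where a: "a = (t, c)" by (cases a) auto
  have tne: "t \<noteq> []" using Cons(2) a by auto
  have 1: "provable (foldr Imp (map lit ((True, t, c) # L)) f)"
    by (rule Cons.IH) (use Cons(2-4) a tne in auto)
  have 2: "provable (foldr Imp (map lit ((False, t, c) # L)) f)"
    by (rule Cons.IH) (use Cons(2-4) a tne in auto)
  have wffT: "wff (foldr Imp (map lit L) f)" using wff_lit[OF Cons(3)] wf by simp
  show ?case
    by (rule pc[OF wffT, where gs="[foldr Imp (map lit ((True, t, c) # L)) f, foldr Imp (map lit ((False, t, c) # L)) f]"])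
      (use 1 2 in \<open>auto simp: lit_def\<close>)
qed

lemma completeness:
  assumes "wff f" "valid TYPE('d) f" "infinite (UNIV :: 'd set)"
  shows "provable f"
  using compl_aux[OF assms, of "atoms f" "[]"] wff_atoms[OF assms(1)] by simp

section \<open>Soundness\<close>

lemma sat_Imp[simp]: "sat D \<sigma> (Imp f g) = (sat D \<sigma> f \<longrightarrow> sat D \<sigma> g)"
  by (simp add: Imp_def)
lemma sat_Iff[simp]: "sat D \<sigma> (Iff f g) = (sat D \<sigma> f \<longleftrightarrow> sat D \<sigma> g)"
  by (auto simp add: Iff_def)

lemma sat_psubst: "sat D \<sigma> (psubst s p) = peval (\<lambda>n. sat D \<sigma> (s n)) p"
  by (induction p) auto

lemma ev_zip_add: "length as = length vs \<Longrightarrow> length as' = length vs \<Longrightarrow>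
  ev (zip (map2 (+) as as') vs) x = ev (zip as vs) x + ev (zip as' vs) x"
proof (induction vs arbitrary: as as')
  case (Cons v vs)
  then show ?case by (cases as; cases as') (auto simp: algebra_simps)
qed simp

lemma ev_zip_mult: "ev (zip (map (\<lambda>a. d * a) as) vs) x = d * ev (zip as vs) x"
proof (induction vs arbitrary: as)
  case (Cons v vs)
  then show ?case by (cases as) (auto simp: algebra_simps)
qed simp

lemma axiom_sound: "axiom f \<Longrightarrow> D \<noteq> {} \<Longrightarrow> sat D \<sigma> f"
proof (induction rule: axiom.induct)
  case (Taut p s)
  then show ?case by (simp add: sat_psubst tautology_def)
next
  case (F1 v)
  then show ?case by (simp add: tval_ev)
next
  case (F2 t c w)
  then show ?case by (simp add: tval_ev)
next
  case (F3 t t' c)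
  have "ev t x = ev t' x" for x using ev_mset[of t t' x] F3.hyps(2) by simp
  then show ?case by (simp add: tval_ev)
next
  case (F4 vs as as' c c')
  have e: "ev (zip (map2 (+) as as') vs) x = ev (zip as vs) x + ev (zip as' vs) x" for x
    using ev_zip_add F4.hyps by blast
  show ?case unfolding sat_Imp sat.simps tval_ev e
  proof (intro impI ballI)
    fix x assume "(\<forall>x\<in>D. c \<le> ev (zip as vs) (\<lambda>v. \<sigma> v x)) \<and> (\<forall>x\<in>D. c' \<le> ev (zip as' vs) (\<lambda>v. \<sigma> v x))" "x \<in> D"
    then show "c + c' \<le> ev (zip as vs) (\<lambda>v. \<sigma> v x) + ev (zip as' vs) (\<lambda>v. \<sigma> v x)"
      by (meson add_mono)
  qed
next
  case (F5 vs as d c)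
  then show ?case by (simp add: tval_ev ev_zip_mult)
next
  case (F6 t c d)
  have ln: "Le t d = Ge (neg t) (- d)" by (simp add: Le_def neg_def)
  obtain x0 where x0: "x0 \<in> D" using F6.prems by blast
  have "sat D \<sigma> (Gt t d)" if H: "\<forall>x\<in>D. c \<le> tval t \<sigma> x"
  proof -
    have 1: "\<forall>x\<in>D. d \<le> tval t \<sigma> x" using H F6.hyps(2) by force
    have "c \<le> tval t \<sigma> x0" using H x0 by blast
    then have "\<not> (- d \<le> tval (neg t) \<sigma> x0)" using F6.hyps(2) by (simp add: tval_ev)
    then have 2: "\<not> (\<forall>x\<in>D. - d \<le> tval (neg t) \<sigma> x)" using x0 by blast
    show ?thesis unfolding Gt_def ln using 1 2 by simp
  qed
  then show ?case by simp
qed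

lemma soundness: "provable f \<Longrightarrow> D \<noteq> {} \<Longrightarrow> sat D \<sigma> f"
proof (induction rule: provable.induct)
  case (Ax f)
  then show ?case by (rule axiom_sound)
next
  case (MP f g)
  then have "sat D \<sigma> f" "sat D \<sigma> (Imp f g)" by blast+
  then show ?case by simp
qed

theorem theorem7p3:
  fixes f :: fm
  assumes "wff f"
    and "infinite (UNIV :: 'd set)"
  shows "(provable f \<longleftrightarrow> valid TYPE('d) f) \<and> (provable f \<longrightarrow> valid TYPE('e) f)"
proof -
  have s: "valid TYPE('a) f" if "provable f" for a :: "'a itself"
    unfolding valid_def using soundness[OF that] by blast
  show ?thesis
  proof (intro conjI iffI impI)
    assume "provable f" then show "valid TYPE('d) f" by (rule s)
  next
    assume "valid TYPE('d) f" then show "provable f" by (rule completeness[OF assms(1) _ assms(2)])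
  next
    assume "provable f" then show "valid TYPE('e) f" by (rule s)
  qed
qed

end
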